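(* Let $P$ be a sum-free $\pi$-calculus process. If there exists a $C_\pi$ process $Q$ such that $P\sim Q$, then $P$ satisfies the non-forwarding property.
   Context: The Confidential $\pi$-calculus $C_\pi$. There are two disjoint countable sets: ${\cal V}$ of variables (ranged over by $x,y,z,\dots$) and ${\cal C}$ of channels (ranged over by $k,l,m,n,\dots$). Let ${\cal N}={\cal V}\cup{\cal C}$, ranged over by $a,b,c,\dots$. Prefixes: $\pi ::= \overline{a}\langle k\rangle \mid a(x) \mid [a=b]\pi$. Processes: $P ::= 0 \mid \pi.P \mid P\,|\,P \mid (\nu k)P \mid\, !P$. The object of an output is always a channel, and the bound object of an input is always a variable. In $(\nu k)P$ the channel $k$ is bound, and in $a(x).P$ the variable $x$ is bound, with scope $P$. The sets $\mathrm{fn}(P)$, $\mathrm{bn}(P)$ and $\mathrm{n}(P)$ are the free, bound and all names of $P$. The sum-free (monadic) $\pi$-calculus has the same syntax, except that any name may occur as the object of an output prefix, and any name may be bound by an input. Thus $C_\pi$ processes are exactly the $\pi$-calculus processes in which no input-bound name is ever the object of an output. Processes are identified up to $\alpha$-conversion. Actions: $\alpha ::= \overline{k}\langle l\rangle \mid k(l) \mid (\nu l)\overline{k}\langle l\rangle \mid \tau$. We have $\mathrm{fn}(\overline{k}\langle l\rangle)=\mathrm{fn}(k(l))=\{k,l\}$, $\mathrm{fn}((\nu l)\overline{k}\langle l\rangle)=\{k\}$, $\mathrm{bn}((\nu l)\overline{k}\langle l\rangle)=\{l\}$, all other bound-name sets are empty, and $\mathrm{n}(\alpha)=\mathrm{fn}(\alpha)\cup\mathrm{bn}(\alpha)$.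 The labelled transition relation is the standard early $\pi$-calculus LTS, which restricts on $C_\pi$ processes to the following rules: - (out) $\overline{k}\langle l\rangle.P \xrightarrow{\overline{k}\langle l\rangle} P$. - (in) $k(x).P \xrightarrow{k(l)} P\{l/x\}$. - (match) If $\pi.P\xrightarrow{\alpha}P'$, then $[a=a]\pi.P\xrightarrow{\alpha}P'$. - (res) If $P\xrightarrow{\alpha}P'$ and $k\notin\mathrm{n}(\alpha)$, then $(\nu k)P\xrightarrow{\alpha}(\nu k)P'$. - (open) If $P\xrightarrow{\overline{k}\langle l\rangle}Q$ and $k\neq l$, then $(\nu l)P\xrightarrow{(\nu l)\overline{k}\langle l\rangle}Q$. - (par-l) If $P\xrightarrow{\alpha}Q$ and $\mathrm{bn}(\alpha)\cap\mathrm{fn}(R)=\emptyset$, then $P|R\xrightarrow{\alpha}Q|R$. - (comm-l) If $P\xrightarrow{\overline{k}\langle l\rangle}P'$ and $Q\xrightarrow{k(l)}Q'$, then $P|Q\xrightarrow{\tau}P'|Q'$. - (close-l) If $P\xrightarrow{(\nu l)\overline{k}\langle l\rangle}P'$, $Q\xrightarrow{k(l)}Q'$ and $l\notin\mathrm{fn}(Q)$, then $P|Q\xrightarrow{\tau}(\nu l)(P'|Q')$. - The symmetric rules (par-r), (comm-r), (close-r). - (rep-act) If $P\xrightarrow{\alpha}P'$, then $!P\xrightarrow{\alpha}P'|!P$. - (rep-comm) If $P\xrightarrow{\overline{k}\langle l\rangle}P'$ and $P\xrightarrow{k(l)}P''$, then $!P\xrightarrow{\tau}(P'|P'')|!P$.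 - (rep-close) If $P\xrightarrow{(\nu l)\overline{k}\langle l\rangle}P'$, $P\xrightarrow{k(l)}P''$ and $l\notin\mathrm{fn}(P)$, then $!P\xrightarrow{\tau}(\nu l)(P'|P'')|!P$. Strong bisimilarity $\sim$ (on all $\pi$-calculus processes, including $C_\pi$ processes) is the largest symmetric binary relation such that whenever $P\sim Q$ and $P\xrightarrow{\alpha}P'$ with $\mathrm{bn}(\alpha)\cap\mathrm{fn}(Q)=\emptyset$, there exists $Q'$ with $Q\xrightarrow{\alpha}Q'$ and $P'\sim Q'$. Non-forwarding property: a process $P_1$ satisfies it if, for every transition sequence $P_1\xrightarrow{\alpha_1}P_2\xrightarrow{\alpha_2}\cdots\xrightarrow{\alpha_m}P_{m+1}$ (with bound outputs chosen fresh), the following holds: whenever $l\notin\mathrm{fn}(P_i)$ and $\alpha_i=k(l)$ for some $i\in\{1,\dots,m-1\}$, then $\alpha_j\neq\overline{k'}\langle l\rangle$ for every $k'$ and every $j=i+1,\dots,m$. *)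

theory Defs
  imports Main
begin

datatype name = Var nat | Chan nat

fun is_chan :: "name \<Rightarrow> bool" where
  "is_chan (Chan _) = True" | "is_chan (Var _) = False"

definition same_sort :: "name \<Rightarrow> name \<Rightarrow> bool" where
  "same_sort a b \<longleftrightarrow> (is_chan a \<longleftrightarrow> is_chan b)"

section \<open>Raw syntax (processes are later identified up to alpha-conversion)\<close>

datatype prefix =
    Out name name
  | In name name             (* a(x), x bound in the continuation *)
  | Match name name prefix

datatype proc =
    Nil
  | Pre prefix proc
  | Par proc proc
  | Res name proc
  | Bang proc

fun pre_fn :: "prefix \<Rightarrow> name set" where
  "pre_fn (Out a b) = {a, b}"
| "pre_fn (In a x) = {a}"
| "pre_fn (Match a b p) = {a, b} \<union> pre_fn p"

fun pre_bn :: "prefix \<Rightarrow> name set" where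
  "pre_bn (Out a b) = {}"
| "pre_bn (In a x) = {x}"
| "pre_bn (Match a b p) = pre_bn p"

fun fnP :: "proc \<Rightarrow> name set" where
  "fnP Nil = {}"
| "fnP (Pre p P) = pre_fn p \<union> (fnP P - pre_bn p)"
| "fnP (Par P Q) = fnP P \<union> fnP Q"
| "fnP (Res k P) = fnP P - {k}"
| "fnP (Bang P) = fnP P"

fun bnP :: "proc \<Rightarrow> name set" where
  "bnP Nil = {}"
| "bnP (Pre p P) = pre_bn p \<union> bnP P"
| "bnP (Par P Q) = bnP P \<union> bnP Q"
| "bnP (Res k P) = insert k (bnP P)"
| "bnP (Bang P) = bnP P"

fun pre_cpi :: "prefix \<Rightarrow> bool" where
  "pre_cpi (Out a b) = is_chan b"
| "pre_cpi (In a x) = (\<not> is_chan x)"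
| "pre_cpi (Match a b p) = pre_cpi p"

fun pi_proc :: "proc \<Rightarrow> bool" where
  "pi_proc Nil = True"
| "pi_proc (Pre p P) = pi_proc P"
| "pi_proc (Par P Q) = (pi_proc P \<and> pi_proc Q)"
| "pi_proc (Res k P) = (is_chan k \<and> pi_proc P)"
| "pi_proc (Bang P) = pi_proc P"

fun cpi_proc :: "proc \<Rightarrow> bool" where
  "cpi_proc Nil = True"
| "cpi_proc (Pre p P) = (pre_cpi p \<and> cpi_proc P)"
| "cpi_proc (Par P Q) = (cpi_proc P \<and> cpi_proc Q)"
| "cpi_proc (Res k P) = (is_chan k \<and> cpi_proc P)"
| "cpi_proc (Bang P) = cpi_proc P"

definition swapN :: "name \<Rightarrow> name \<Rightarrow> name \<Rightarrow> name" where
  "swapN a b c = (if c = a then b else if c = b then a else c)"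

fun swap_pre :: "name \<Rightarrow> name \<Rightarrow> prefix \<Rightarrow> prefix" where
  "swap_pre a b (Out c d) = Out (swapN a b c) (swapN a b d)"
| "swap_pre a b (In c x) = In (swapN a b c) (swapN a b x)"
| "swap_pre a b (Match c d p) = Match (swapN a b c) (swapN a b d) (swap_pre a b p)"

fun swapP :: "name \<Rightarrow> name \<Rightarrow> proc \<Rightarrow> proc" where
  "swapP a b Nil = Nil"
| "swapP a b (Pre p P) = Pre (swap_pre a b p) (swapP a b P)"
| "swapP a b (Par P Q) = Par (swapP a b P) (swapP a b Q)"
| "swapP a b (Res k P) = Res (swapN a b k) (swapP a b P)"
| "swapP a b (Bang P) = Bang (swapP a b P)"

fun set_binder :: "prefix \<Rightarrow> name \<Rightarrow> prefix" where
  "set_binder (Out a b) y = Out a b"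
| "set_binder (In a x) y = In a y"
| "set_binder (Match a b p) y = Match a b (set_binder p y)"

inductive alpha :: "proc \<Rightarrow> proc \<Rightarrow> bool" where
  a_nil: "alpha Nil Nil"
| a_pre: "alpha P P' \<Longrightarrow> alpha (Pre p P) (Pre p P')"
| a_par: "alpha P P' \<Longrightarrow> alpha Q Q' \<Longrightarrow> alpha (Par P Q) (Par P' Q')"
| a_res: "alpha P P' \<Longrightarrow> alpha (Res k P) (Res k P')"
| a_bang: "alpha P P' \<Longrightarrow> alpha (Bang P) (Bang P')"
| a_res_ren: "same_sort k k' \<Longrightarrow> k' \<notin> fnP P \<Longrightarrow>
     alpha (Res k P) (Res k' (swapP k k' P))"
| a_in_ren: "pre_bn p = {x} \<Longrightarrow> same_sort x y \<Longrightarrow> y \<notin> fnP P \<Longrightarrow>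
     alpha (Pre p P) (Pre (set_binder p y) (swapP x y P))"
| a_sym: "alpha P Q \<Longrightarrow> alpha Q P"
| a_trans: "alpha P Q \<Longrightarrow> alpha Q R \<Longrightarrow> alpha P R"

text \<open>Substitution of the name l for the free occurrences of x (capture is ruled out
  by the side condition of the input rule; alpha-conversion makes that harmless).\<close>

definition substN :: "name \<Rightarrow> name \<Rightarrow> name \<Rightarrow> name" where
  "substN x l a = (if a = x then l else a)"

fun subst_pre :: "name \<Rightarrow> name \<Rightarrow> prefix \<Rightarrow> prefix" where
  "subst_pre x l (Out a b) = Out (substN x l a) (substN x l b)"
| "subst_pre x l (In a y) = In (substN x l a) y"
| "subst_pre x l (Match a b p) = Match (substN x l a) (substN x l b) (subst_pre x l p)"

fun substP :: "name \<Rightarrow> name \<Rightarrow> proc \<Rightarrow> proc" where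
  "substP x l Nil = Nil"
| "substP x l (Pre p P) =
     Pre (subst_pre x l p) (if x \<in> pre_bn p then P else substP x l P)"
| "substP x l (Par P Q) = Par (substP x l P) (substP x l Q)"
| "substP x l (Res k P) = (if k = x then Res k P else Res k (substP x l P))"
| "substP x l (Bang P) = Bang (substP x l P)"

datatype act =
    OutA name name
  | InA name name
  | BOutA name name
  | Tau

fun fnA :: "act \<Rightarrow> name set" where
  "fnA (OutA k l) = {k, l}"
| "fnA (InA k l) = {k, l}"
| "fnA (BOutA k l) = {k}"
| "fnA Tau = {}"

fun bnA :: "act \<Rightarrow> name set" where
  "bnA (BOutA k l) = {l}"
| "bnA _ = {}"

definition nA :: "act \<Rightarrow> name set" where
  "nA a = fnA a \<union> bnA a"

inductive trans :: "proc \<Rightarrow> act \<Rightarrow> proc \<Rightarrow> bool" where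
  t_out: "is_chan k \<Longrightarrow> is_chan l \<Longrightarrow> trans (Pre (Out k l) P) (OutA k l) P"
| t_in: "is_chan k \<Longrightarrow> is_chan l \<Longrightarrow> l \<notin> bnP P \<Longrightarrow>
     trans (Pre (In k x) P) (InA k l) (substP x l P)"
| t_match: "trans (Pre p P) a P' \<Longrightarrow> trans (Pre (Match c c p) P) a P'"
| t_res: "trans P a P' \<Longrightarrow> k \<notin> nA a \<Longrightarrow> trans (Res k P) a (Res k P')"
| t_open: "trans P (OutA k l) Q \<Longrightarrow> k \<noteq> l \<Longrightarrow> trans (Res l P) (BOutA k l) Q"
| t_parl: "trans P a Q \<Longrightarrow> bnA a \<inter> fnP R = {} \<Longrightarrow> trans (Par P R) a (Par Q R)"
| t_parr: "trans P a Q \<Longrightarrow> bnA a \<inter> fnP R = {} \<Longrightarrow> trans (Par R P) a (Par R Q)"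
| t_comml: "trans P (OutA k l) P' \<Longrightarrow> trans Q (InA k l) Q' \<Longrightarrow> trans (Par P Q) Tau (Par P' Q')"
| t_commr: "trans P (OutA k l) P' \<Longrightarrow> trans Q (InA k l) Q' \<Longrightarrow> trans (Par Q P) Tau (Par Q' P')"
| t_closel: "trans P (BOutA k l) P' \<Longrightarrow> trans Q (InA k l) Q' \<Longrightarrow> l \<notin> fnP Q \<Longrightarrow>
     trans (Par P Q) Tau (Res l (Par P' Q'))"
| t_closer: "trans P (BOutA k l) P' \<Longrightarrow> trans Q (InA k l) Q' \<Longrightarrow> l \<notin> fnP Q \<Longrightarrow>
     trans (Par Q P) Tau (Res l (Par Q' P'))"
| t_rep_act: "trans P a P' \<Longrightarrow> trans (Bang P) a (Par P' (Bang P))"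
| t_rep_comm: "trans P (OutA k l) P' \<Longrightarrow> trans P (InA k l) P'' \<Longrightarrow>
     trans (Bang P) Tau (Par (Par P' P'') (Bang P))"
| t_rep_close: "trans P (BOutA k l) P' \<Longrightarrow> trans P (InA k l) P'' \<Longrightarrow> l \<notin> fnP P \<Longrightarrow>
     trans (Bang P) Tau (Par (Res l (Par P' P'')) (Bang P))"
| t_alpha: "alpha P P1 \<Longrightarrow> trans P1 a Q1 \<Longrightarrow> alpha Q1 Q \<Longrightarrow> trans P a Q"

definition bisimulation :: "(proc \<times> proc) set \<Rightarrow> bool" where
  "bisimulation R \<longleftrightarrow> sym R \<and>
     (\<forall>(P, Q) \<in> R. \<forall>a P'. trans P a P' \<and> bnA a \<inter> fnP Q = {} \<longrightarrow>
        (\<exists>Q'. trans Q a Q' \<and> (P', Q') \<in> R))"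

definition bisim :: "proc \<Rightarrow> proc \<Rightarrow> bool" (infix "\<sim>\<^sub>\<pi>" 50) where
  "P \<sim>\<^sub>\<pi> Q \<longleftrightarrow> (\<exists>R. bisimulation R \<and> (P, Q) \<in> R)"

text \<open>A transition sequence P_1 -a_1-> ... -a_m-> P_(m+1) is given by lists ps (length m+1)
  and as (length m), 0-indexed.\<close>

definition trans_seq :: "proc list \<Rightarrow> act list \<Rightarrow> bool" where
  "trans_seq ps as \<longleftrightarrow> length ps = Suc (length as) \<and>
     (\<forall>i < length as. trans (ps ! i) (as ! i) (ps ! Suc i))"

definition bouts_fresh :: "proc list \<Rightarrow> act list \<Rightarrow> bool" where
  "bouts_fresh ps as \<longleftrightarrow>
     (\<forall>j k l. j < length as \<and> as ! j = BOutA k l \<longrightarrow>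
        (\<forall>i \<le> j. l \<notin> fnP (ps ! i)) \<and> (\<forall>i < j. l \<notin> nA (as ! i)))"

definition non_forwarding :: "proc \<Rightarrow> bool" where
  "non_forwarding P1 \<longleftrightarrow>
     (\<forall>ps as. trans_seq ps as \<and> ps ! 0 = P1 \<and> bouts_fresh ps as \<longrightarrow>
        (\<forall>i k l. Suc i < length as \<and> l \<notin> fnP (ps ! i) \<and> as ! i = InA k l \<longrightarrow>
           (\<forall>j k'. i < j \<and> j < length as \<longrightarrow> as ! j \<noteq> OutA k' l)))"

end

theory Submission
  imports Defs
begin


lemma swapN_same[simp]: "swapN a a c = c" by (simp add: swapN_def)
lemma swapN_inv[simp]: "swapN a b (swapN a b c) = c" by (simp add: swapN_def)
lemma swapN_sym: "swapN a b c = swapN b a c" by (simp add: swapN_def)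
lemma swapN_inj[simp]: "(swapN a b c = swapN a b d) = (c = d)" by (auto simp: swapN_def)
lemma swapN_a[simp]: "swapN a b a = b" by (simp add: swapN_def)
lemma swapN_b[simp]: "swapN a b b = a" by (simp add: swapN_def)
lemma swapN_other[simp]: "c \<noteq> a \<Longrightarrow> c \<noteq> b \<Longrightarrow> swapN a b c = c" by (simp add: swapN_def)
lemma swapN_comp: "swapN m n (swapN k k' c) = swapN (swapN m n k) (swapN m n k') (swapN m n c)"
  by (auto simp add: swapN_def)
lemma swapN_chan: "same_sort a b \<Longrightarrow> is_chan (swapN a b c) = is_chan c"
  by (simp add: swapN_def same_sort_def)
lemma same_sort_swap: "same_sort a b \<Longrightarrow> same_sort (swapN a b c) (swapN a b d) = same_sort c d"
  by (simp add: same_sort_def swapN_chan)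
lemma swapN_mem[simp]: "(swapN a b c \<in> swapN a b ` S) = (c \<in> S)" by auto

fun swapA :: "name \<Rightarrow> name \<Rightarrow> act \<Rightarrow> act" where
  "swapA a b (OutA k l) = OutA (swapN a b k) (swapN a b l)"
| "swapA a b (InA k l) = InA (swapN a b k) (swapN a b l)"
| "swapA a b (BOutA k l) = BOutA (swapN a b k) (swapN a b l)"
| "swapA a b Tau = Tau"

fun pre_ofn :: "prefix \<Rightarrow> name set" where
  "pre_ofn (Out a b) = {b}"
| "pre_ofn (In a x) = {}"
| "pre_ofn (Match a b p) = pre_ofn p"

fun ofn :: "proc \<Rightarrow> name set" where
  "ofn Nil = {}"
| "ofn (Pre p P) = pre_ofn p \<union> (ofn P - pre_bn p)"
| "ofn (Par P Q) = ofn P \<union> ofn Q"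
| "ofn (Res k P) = ofn P - {k}"
| "ofn (Bang P) = ofn P"

lemma swap_pre_inv[simp]: "swap_pre a b (swap_pre a b p) = p" by (induction p) auto
lemma swapP_inv[simp]: "swapP a b (swapP a b P) = P" by (induction P) auto
lemma swapA_inv[simp]: "swapA a b (swapA a b x) = x" by (cases x) auto
lemma swap_pre_sym: "swap_pre a b p = swap_pre b a p" by (induction p) (auto simp: swapN_sym)
lemma swapP_sym: "swapP a b P = swapP b a P" by (induction P) (auto simp: swapN_sym swap_pre_sym)

lemma swap_pre_comp: "swap_pre m n (swap_pre k k' p) = swap_pre (swapN m n k) (swapN m n k') (swap_pre m n p)"
  apply (induction p) 
  apply (simp add: swapN_comp[of m n k k'])
  apply (simp add: swapN_comp[of m n k k'])
  apply (simp add: swapN_comp[of m n k k'])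
  done
lemma swapP_comp: "swapP m n (swapP k k' P) = swapP (swapN m n k) (swapN m n k') (swapP m n P)"
  apply (induction P)
  apply (simp add: swap_pre_comp[of m n k k'])
  apply (simp add: swap_pre_comp[of m n k k'])
  apply (simp add: swap_pre_comp[of m n k k'])
  apply (simp add: swapN_comp[of m n k k'])
  apply (simp add: swap_pre_comp[of m n k k'])
  done

lemma pre_fn_swap[simp]: "pre_fn (swap_pre a b p) = swapN a b ` pre_fn p" by (induction p) auto
lemma pre_bn_swap[simp]: "pre_bn (swap_pre a b p) = swapN a b ` pre_bn p" by (induction p) auto
lemma pre_ofn_swap[simp]: "pre_ofn (swap_pre a b p) = swapN a b ` pre_ofn p" by (induction p) auto
lemma fnP_swap[simp]: "fnP (swapP a b P) = swapN a b ` fnP P"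
  by (induction P) (auto simp: image_Un)
lemma bnP_swap[simp]: "bnP (swapP a b P) = swapN a b ` bnP P"
  by (induction P) (auto simp: image_Un)
lemma ofn_swap[simp]: "ofn (swapP a b P) = swapN a b ` ofn P"
  by (induction P) (auto simp: image_Un)
lemma fnA_swap[simp]: "fnA (swapA a b x) = swapN a b ` fnA x" by (cases x) auto
lemma bnA_swap[simp]: "bnA (swapA a b x) = swapN a b ` bnA x" by (cases x) auto
lemma nA_swap[simp]: "nA (swapA a b x) = swapN a b ` nA x" by (simp add: nA_def image_Un)

lemma set_binder_swap: "swap_pre a b (set_binder p y) = set_binder (swap_pre a b p) (swapN a b y)"
  by (induction p) auto
lemma substN_swap: "swapN a b (substN x l c) = substN (swapN a b x) (swapN a b l) (swapN a b c)"
  by (simp add: substN_def)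
lemma subst_pre_swap: "swap_pre a b (subst_pre x l p) = subst_pre (swapN a b x) (swapN a b l) (swap_pre a b p)"
  by (induction p) (auto simp: substN_swap)
lemma substP_swap: "swapP a b (substP x l P) = substP (swapN a b x) (swapN a b l) (swapP a b P)"
  by (induction P) (auto simp: subst_pre_swap)

lemma pre_cpi_swap: "same_sort a b \<Longrightarrow> pre_cpi (swap_pre a b p) = pre_cpi p"
  by (induction p) (auto simp: swapN_chan)
lemma cpi_swap: "same_sort a b \<Longrightarrow> cpi_proc (swapP a b P) = cpi_proc P"
  by (induction P) (auto simp: swapN_chan pre_cpi_swap)



lemma alpha_refl[simp, intro]: "alpha P P"
  by (induction P) (auto intro: alpha.intros)

lemma pre_bn_cases: "pre_bn p = {} \<or> (\<exists>x. pre_bn p = {x})"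
  by (induction p) auto

lemma pre_bn_set_binder: "pre_bn p = {x} \<Longrightarrow> pre_bn (set_binder p y) = {y}"
  by (induction p) auto
lemma pre_fn_set_binder[simp]: "pre_fn (set_binder p y) = pre_fn p"
  by (induction p) auto
lemma pre_ofn_set_binder[simp]: "pre_ofn (set_binder p y) = pre_ofn p"
  by (induction p) auto
lemma pre_cpi_set_binder: "pre_bn p = {x} \<Longrightarrow> same_sort x y \<Longrightarrow> pre_cpi (set_binder p y) = pre_cpi p"
  by (induction p) (auto simp: same_sort_def)

lemma pre_ofn_sub: "pre_ofn p \<subseteq> pre_fn p" by (induction p) auto
lemma ofn_sub: "ofn P \<subseteq> fnP P" by (induction P) (use pre_ofn_sub in auto)

lemma swap_fresh_diff: "y \<notin> S \<Longrightarrow> swapN x y ` S - {y} = S - {x}"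
  by (auto simp: swapN_def)

lemma alpha_inv: "alpha P Q \<Longrightarrow> fnP P = fnP Q \<and> ofn P = ofn Q \<and> (cpi_proc P = cpi_proc Q)"
proof (induction rule: alpha.induct)
  case (a_res_ren k k' P)
  have "k' \<notin> ofn P" using a_res_ren ofn_sub by blast
  then show ?case using a_res_ren by (auto simp: swap_fresh_diff cpi_swap same_sort_def)
next
  case (a_in_ren p x y P)
  have "y \<notin> ofn P" using a_in_ren ofn_sub by blast
  then show ?case using a_in_ren
    by (simp add: pre_bn_set_binder swap_fresh_diff cpi_swap pre_cpi_set_binder)
qed auto



lemma alpha_swap:
  assumes "alpha P Q" "same_sort m n"
  shows "alpha (swapP m n P) (swapP m n Q)"
  using assms(1)
proof (induction rule: alpha.induct)
  case (a_res_ren k k' P)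
  have "alpha (Res (swapN m n k) (swapP m n P))
          (Res (swapN m n k') (swapP (swapN m n k) (swapN m n k') (swapP m n P)))"
    apply (rule alpha.a_res_ren)
    using a_res_ren assms(2) by (auto simp: same_sort_swap)
  then show ?case by (simp add: swapP_comp[of m n k k'])
next
  case (a_in_ren p x y P)
  have "alpha (Pre (swap_pre m n p) (swapP m n P))
          (Pre (set_binder (swap_pre m n p) (swapN m n y)) (swapP (swapN m n x) (swapN m n y) (swapP m n P)))"
    apply (rule alpha.a_in_ren)
    using a_in_ren assms(2) by (auto simp: same_sort_swap)
  then show ?case by (simp add: swapP_comp[of m n x y] set_binder_swap)
qed (auto intro: alpha.intros)

lemma swap_disj: "A \<inter> B = {} \<Longrightarrow> swapN m n ` A \<inter> swapN m n ` B = {}"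
  by auto

lemma trans_swap:
  assumes "trans P a Q" "same_sort m n"
  shows "trans (swapP m n P) (swapA m n a) (swapP m n Q)"
  using assms(1)
proof (induction rule: trans.induct)
  case (t_alpha P P1 a Q1 Q)
  then show ?case using alpha_swap[OF _ assms(2)] trans.t_alpha by blast
next
  case (t_in k l P x)
  then show ?case using assms(2) by (auto simp: substP_swap swapN_chan intro!: trans.t_in)
next
  case (t_parl P a Q R)
  then show ?case by (simp, intro trans.t_parl) (auto simp: swap_disj)
next
  case (t_parr P a Q R)
  then show ?case by (simp, intro trans.t_parr) (auto simp: swap_disj)
qed (use assms(2) in \<open>auto simp: swapN_chan image_Int[symmetric] intro: trans.intros\<close>)



lemma swap_pre_same[simp]: "swap_pre a a p = p" by (induction p) auto
lemma swapP_same[simp]: "swapP a a P = P" by (induction P) auto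

lemma swap_pre_fresh:
  "m \<notin> pre_fn p \<Longrightarrow> m' \<notin> pre_fn p \<Longrightarrow>
   (pre_bn p = {} \<longrightarrow> swap_pre m m' p = p) \<and>
   (\<forall>x. pre_bn p = {x} \<longrightarrow> swap_pre m m' p = set_binder p (swapN m m' x))"
  by (induction p) auto

lemma set_binder_id: "pre_bn p = {x} \<Longrightarrow> set_binder p x = p"
  by (induction p) auto

lemma same_sort_sym: "same_sort a b \<Longrightarrow> same_sort b a" by (auto simp: same_sort_def)

lemma alpha_swap_fresh:
  "same_sort m m' \<Longrightarrow> m \<notin> fnP P \<Longrightarrow> m' \<notin> fnP P \<Longrightarrow> alpha P (swapP m m' P)"
proof (induction P)
  case (Pre p P)
  show ?case
  proof (cases "m = m'")
    case True then show ?thesis by simp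
  next
    case neq: False
    have mp: "m \<notin> pre_fn p" "m' \<notin> pre_fn p" using Pre.prems by auto
    note sf = swap_pre_fresh[OF mp]
    from pre_bn_cases[of p] show ?thesis
    proof
      assume e: "pre_bn p = {}"
      then have "alpha P (swapP m m' P)" using Pre by auto
      then show ?thesis using sf e by (auto intro: alpha.a_pre)
    next
      assume "\<exists>x. pre_bn p = {x}"
      then obtain x where x: "pre_bn p = {x}" by blast
      consider "x = m" | "x = m'" | "x \<noteq> m" "x \<noteq> m'" by blast
      then show ?thesis
      proof cases
        case 1
        then show ?thesis using sf x Pre.prems neq by (auto intro!: alpha.a_in_ren)
      next
        case 2
        have "alpha (Pre p P) (Pre (set_binder p m) (swapP m' m P))"
          using x 2 Pre.prems neq by (auto intro!: alpha.a_in_ren same_sort_sym)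
        then show ?thesis using sf x 2 by (simp add: swapP_sym)
      next
        case 3
        have "alpha P (swapP m m' P)" using Pre x 3 by auto
        then show ?thesis using sf x 3 set_binder_id[OF x] by (auto intro: alpha.a_pre)
      qed
    qed
  qed
next
  case (Res k P)
  show ?case
  proof (cases "m = m'")
    case True then show ?thesis by simp
  next
    case neq: False
    consider "k = m" | "k = m'" | "k \<noteq> m" "k \<noteq> m'" by blast
    then show ?thesis
    proof cases
      case 1
      then show ?thesis using Res.prems neq by (auto intro!: alpha.a_res_ren)
    next
      case 2
      have "alpha (Res k P) (Res m (swapP m' m P))"
        using 2 Res.prems neq by (auto intro!: alpha.a_res_ren same_sort_sym)
      then show ?thesis using 2 by (simp add: swapP_sym)
    next
      case 3
      then show ?thesis using Res by (auto intro: alpha.a_res)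
    qed
  qed
qed (auto intro: alpha.intros)



lemma bisim_sym: "P \<sim>\<^sub>\<pi> Q \<Longrightarrow> Q \<sim>\<^sub>\<pi> P"
  unfolding bisim_def bisimulation_def by (meson symD)

lemma bisim_step: "P \<sim>\<^sub>\<pi> Q \<Longrightarrow> trans P a P' \<Longrightarrow> bnA a \<inter> fnP Q = {} \<Longrightarrow>
   \<exists>Q'. trans Q a Q' \<and> P' \<sim>\<^sub>\<pi> Q'"
  unfolding bisim_def bisimulation_def by blast

lemma bisim_alpha_left:
  assumes "alpha P0 P" "P \<sim>\<^sub>\<pi> Q" shows "P0 \<sim>\<^sub>\<pi> Q"
proof -
  obtain R where R: "bisimulation R" "(P, Q) \<in> R" using assms(2) by (auto simp: bisim_def)
  define R' where "R' = {(A, B). \<exists>A0 B0. alpha A A0 \<and> (A0, B0) \<in> R \<and> alpha B0 B}"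
  have symR: "sym R" using R(1) by (simp add: bisimulation_def)
  have "sym R'"
    unfolding R'_def sym_def using symR by (blast intro: alpha.a_sym dest: symD)
  moreover have "\<forall>(A, B) \<in> R'. \<forall>a A'. trans A a A' \<and> bnA a \<inter> fnP B = {} \<longrightarrow>
        (\<exists>B'. trans B a B' \<and> (A', B') \<in> R')"
  proof (clarify)
    fix A B a A'
    assume AB: "(A, B) \<in> R'" and t: "trans A a A'" and d: "bnA a \<inter> fnP B = {}"
    then obtain A0 B0 where h: "alpha A A0" "(A0, B0) \<in> R" "alpha B0 B" by (auto simp: R'_def)
    have t0: "trans A0 a A'" using trans.t_alpha[OF alpha.a_sym[OF h(1)] t alpha_refl] .
    have "fnP B0 = fnP B" using alpha_inv[OF h(3)] by simp
    with d have "bnA a \<inter> fnP B0 = {}" by simp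
    then obtain B' where "trans B0 a B'" "(A', B') \<in> R"
      using R(1) h(2) t0 unfolding bisimulation_def by blast
    moreover have "trans B a B'" using trans.t_alpha[OF alpha.a_sym[OF h(3)] \<open>trans B0 a B'\<close> alpha_refl] .
    ultimately show "\<exists>B'. trans B a B' \<and> (A', B') \<in> R'" unfolding R'_def by blast
  qed
  ultimately have "bisimulation R'" by (simp add: bisimulation_def)
  moreover have "(P0, Q) \<in> R'" unfolding R'_def using assms(1) R(2) by blast
  ultimately show ?thesis by (auto simp: bisim_def)
qed

lemma bisim_swap:
  assumes "same_sort m n" "P \<sim>\<^sub>\<pi> Q" shows "swapP m n P \<sim>\<^sub>\<pi> swapP m n Q"
proof -
  obtain R where R: "bisimulation R" "(P, Q) \<in> R" using assms(2) by (auto simp: bisim_def)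
  define R' where "R' = (\<lambda>(A, B). (swapP m n A, swapP m n B)) ` R"
  have symR: "sym R" using R(1) by (simp add: bisimulation_def)
  have "sym R'" unfolding R'_def sym_def using symR by (auto dest: symD)
  moreover have "\<forall>(A, B) \<in> R'. \<forall>a A'. trans A a A' \<and> bnA a \<inter> fnP B = {} \<longrightarrow>
        (\<exists>B'. trans B a B' \<and> (A', B') \<in> R')"
  proof (clarify)
    fix A B a A'
    assume AB: "(A, B) \<in> R'" and t: "trans A a A'" and d: "bnA a \<inter> fnP B = {}"
    then obtain A0 B0 where h: "(A0, B0) \<in> R" "A = swapP m n A0" "B = swapP m n B0"
      by (auto simp: R'_def)
    have t0: "trans A0 (swapA m n a) (swapP m n A')"
      using trans_swap[OF t assms(1)] h(2) by simp
    have "bnA (swapA m n a) \<inter> fnP B0 = {}"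
      using swap_disj[OF d, of m n] h(3) by (simp add: image_image)
    then obtain B' where B': "trans B0 (swapA m n a) B'" "(swapP m n A', B') \<in> R"
      using R(1) h(1) t0 unfolding bisimulation_def by blast
    have "trans B a (swapP m n B')" using trans_swap[OF B'(1) assms(1)] h(3) by simp
    moreover have "(A', swapP m n B') \<in> R'" unfolding R'_def using B'(2)
      by (auto intro!: image_eqI[where x="(swapP m n A', B')"])
    ultimately show "\<exists>B'. trans B a B' \<and> (A', B') \<in> R'" by blast
  qed
  ultimately have "bisimulation R'" by (simp add: bisimulation_def)
  moreover have "(swapP m n P, swapP m n Q) \<in> R'" unfolding R'_def using R(2) by (force intro!: image_eqI[where x="(P, Q)"])
  ultimately show ?thesis by (auto simp: bisim_def)
qed

lemma bisim_rename:
  assumes "P \<sim>\<^sub>\<pi> Q" "same_sort m m'" "m \<notin> fnP P" "m' \<notin> fnP P"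
  shows "P \<sim>\<^sub>\<pi> swapP m m' Q"
  using bisim_alpha_left[OF alpha_swap_fresh[OF assms(2-4)] bisim_swap[OF assms(2,1)]] .



lemma act_chan: "trans P a Q \<Longrightarrow>
   (\<forall>k l. (a = OutA k l \<longrightarrow> is_chan l) \<and> (a = InA k l \<longrightarrow> is_chan l) \<and> (a = BOutA k l \<longrightarrow> is_chan l))"
  by (induction rule: trans.induct) auto

lemma out_ofn: "trans P a Q \<Longrightarrow> (\<forall>k l. a = OutA k l \<longrightarrow> l \<in> ofn P)"
proof (induction rule: trans.induct)
  case (t_alpha P P1 a Q1 Q)
  then show ?case using alpha_inv by blast
qed (auto simp: nA_def)

lemma pre_cpi_ofn: "pre_cpi p \<Longrightarrow> pre_ofn p \<subseteq> {c. is_chan c}" by (induction p) auto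
lemma cpi_ofn: "cpi_proc P \<Longrightarrow> ofn P \<subseteq> {c. is_chan c}"
  by (induction P) (use pre_cpi_ofn in auto)

lemma pre_cpi_subst: "is_chan l \<Longrightarrow> pre_cpi p \<Longrightarrow> pre_cpi (subst_pre x l p)"
  by (induction p) (auto simp: substN_def)
lemma cpi_subst: "is_chan l \<Longrightarrow> cpi_proc P \<Longrightarrow> cpi_proc (substP x l P)"
  by (induction P) (auto simp: pre_cpi_subst)
lemma pre_bn_subst[simp]: "pre_bn (subst_pre x l p) = pre_bn p" by (induction p) auto
lemma pre_ofn_subst: "\<not> is_chan x \<Longrightarrow> pre_cpi p \<Longrightarrow> pre_ofn (subst_pre x l p) = pre_ofn p"
  by (induction p) (auto simp: substN_def)
lemma ofn_subst: "\<not> is_chan x \<Longrightarrow> cpi_proc P \<Longrightarrow> ofn (substP x l P) \<subseteq> ofn P"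
  by (induction P) (auto simp: pre_ofn_subst)

lemma cpi_trans: "trans P a Q \<Longrightarrow> cpi_proc P \<Longrightarrow> cpi_proc Q \<and> ofn Q \<subseteq> ofn P \<union> bnA a"
proof (induction rule: trans.induct)
  case (t_in k l P x)
  then have h: "\<not> is_chan x" "cpi_proc P" by auto
  have "ofn (substP x l P) \<subseteq> ofn P" using ofn_subst[OF h] .
  moreover have "x \<notin> ofn P" using cpi_ofn[OF h(2)] h(1) by auto
  ultimately show ?case using cpi_subst t_in h by auto
next
  case (t_alpha P P1 a Q1 Q)
  then show ?case using alpha_inv by metis
next
  case (t_closel P k l P' Q Q')
  then show ?case using act_chan by auto
next
  case (t_closer P k l P' Q Q')
  then show ?case using act_chan by auto
next
  case (t_rep_close P k l P' P'')
  then show ?case using act_chan by auto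
qed auto

lemma finite_pre_fn: "finite (pre_fn p)" by (induction p) auto
lemma finite_fnP: "finite (fnP P)" by (induction P) (auto simp: finite_pre_fn)

lemma fresh_chan: "finite S \<Longrightarrow> \<exists>c. is_chan c \<and> c \<notin> S"
proof -
  assume "finite S"
  have "finite (Chan -` S)" using \<open>finite S\<close> by (rule finite_vimageI) (simp add: inj_on_def)
  then obtain n where "n \<notin> Chan -` S" using ex_new_if_finite[OF infinite_UNIV_nat] by blast
  then show ?thesis by (intro exI[of _ "Chan n"]) auto
qed



lemma chan_same_sort: "is_chan a \<Longrightarrow> is_chan b \<Longrightarrow> same_sort a b"
  by (simp add: same_sort_def)

lemma sim_step:
  assumes "P \<sim>\<^sub>\<pi> Q" "cpi_proc Q" "trans P a P'"
    "\<forall>k m. a = BOutA k m \<longrightarrow> m \<notin> fnP P \<and> m \<notin> L" "finite L" "L \<inter> ofn Q = {}"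
  shows "\<exists>Q'. P' \<sim>\<^sub>\<pi> Q' \<and> cpi_proc Q' \<and> L \<inter> ofn Q' = {}"
proof (cases "\<exists>k m. a = BOutA k m")
  case True
  then obtain k m where a: "a = BOutA k m" by blast
  have mc: "is_chan m" using act_chan[OF assms(3)] a by auto
  have mP: "m \<notin> fnP P" "m \<notin> L" using assms(4) a by auto
  obtain m' where m': "is_chan m'" "m' \<notin> fnP P \<union> fnP Q \<union> L \<union> {m}"
    using fresh_chan[of "fnP P \<union> fnP Q \<union> L \<union> {m}"] finite_fnP assms(5) by auto
  define Q1 where "Q1 = swapP m m' Q"
  have ss: "same_sort m m'" using mc m'(1) by (rule chan_same_sort)
  have b1: "P \<sim>\<^sub>\<pi> Q1" unfolding Q1_def using bisim_rename[OF assms(1) ss mP(1)] m' by auto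
  have c1: "cpi_proc Q1" unfolding Q1_def using cpi_swap[OF ss] assms(2) by simp
  have l1: "L \<inter> ofn Q1 = {}" unfolding Q1_def using assms(6) mP(2) m'(2)
    by (auto simp: swapN_def)
  have f1: "bnA a \<inter> fnP Q1 = {}" unfolding Q1_def using a m'(2)
    by (auto simp: swapN_def)
  obtain Q' where Q': "trans Q1 a Q'" "P' \<sim>\<^sub>\<pi> Q'" using bisim_step[OF b1 assms(3) f1] by blast
  have "cpi_proc Q' \<and> ofn Q' \<subseteq> ofn Q1 \<union> bnA a" using cpi_trans[OF Q'(1) c1] .
  then show ?thesis using Q'(2) l1 a mP(2) by auto
next
  case False
  then have "bnA a = {}" by (cases a) auto
  then obtain Q' where Q': "trans Q a Q'" "P' \<sim>\<^sub>\<pi> Q'" using bisim_step[OF assms(1) assms(3)] by blast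
  have "cpi_proc Q' \<and> ofn Q' \<subseteq> ofn Q \<union> bnA a" using cpi_trans[OF Q'(1) assms(2)] .
  then show ?thesis using Q'(2) assms(6) \<open>bnA a = {}\<close> by auto
qed

lemma sim_in:
  assumes "P \<sim>\<^sub>\<pi> Q" "cpi_proc Q" "trans P (InA k l) P'" "l \<notin> fnP P"
  shows "\<exists>Q'. P' \<sim>\<^sub>\<pi> Q' \<and> cpi_proc Q' \<and> l \<notin> ofn Q'"
proof -
  have lc: "is_chan l" using act_chan[OF assms(3)] by auto
  obtain l' where l': "is_chan l'" "l' \<notin> fnP P \<union> fnP Q \<union> {l}"
    using fresh_chan[of "fnP P \<union> fnP Q \<union> {l}"] finite_fnP by auto
  define Q1 where "Q1 = swapP l l' Q"
  have ss: "same_sort l l'" using lc l'(1) by (rule chan_same_sort)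
  have b1: "P \<sim>\<^sub>\<pi> Q1" unfolding Q1_def using bisim_rename[OF assms(1) ss assms(4)] l' by auto
  have c1: "cpi_proc Q1" unfolding Q1_def using cpi_swap[OF ss] assms(2) by simp
  have "l \<notin> fnP Q1" unfolding Q1_def using l'(2) by (auto simp: swapN_def)
  then have l1: "l \<notin> ofn Q1" using ofn_sub by blast
  obtain Q' where Q': "trans Q1 (InA k l) Q'" "P' \<sim>\<^sub>\<pi> Q'" using bisim_step[OF b1 assms(3)] by auto
  have "cpi_proc Q' \<and> ofn Q' \<subseteq> ofn Q1 \<union> bnA (InA k l)" using cpi_trans[OF Q'(1) c1] .
  then show ?thesis using Q'(2) l1 by auto
qed

lemma seq_sim:
  assumes "trans_seq ps as" "bouts_fresh ps as" "finite L" "ps ! j0 \<sim>\<^sub>\<pi> Q0" "cpi_proc Q0"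
    "L \<inter> ofn Q0 = {}"
    "\<forall>j k m. j0 \<le> j \<and> j < length as \<and> as ! j = BOutA k m \<longrightarrow> m \<notin> L"
  shows "j0 + d \<le> length as \<Longrightarrow> \<exists>Q. ps ! (j0 + d) \<sim>\<^sub>\<pi> Q \<and> cpi_proc Q \<and> L \<inter> ofn Q = {}"
proof (induction d)
  case 0
  then show ?case using assms by auto
next
  case (Suc d)
  then obtain Q where Q: "ps ! (j0 + d) \<sim>\<^sub>\<pi> Q" "cpi_proc Q" "L \<inter> ofn Q = {}" by auto
  let ?j = "j0 + d"
  have jl: "?j < length as" using Suc.prems by simp
  have t: "trans (ps ! ?j) (as ! ?j) (ps ! Suc ?j)" using assms(1) jl by (simp add: trans_seq_def)
  have "\<forall>k m. as ! ?j = BOutA k m \<longrightarrow> m \<notin> fnP (ps ! ?j) \<and> m \<notin> L"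
    using assms(2) assms(7)[rule_format, of ?j] jl unfolding bouts_fresh_def by auto
  from sim_step[OF Q(1,2) t this assms(3) Q(3)] show ?case by simp
qed

lemma main_lemma:
  assumes "\<exists>Q. cpi_proc Q \<and> P \<sim>\<^sub>\<pi> Q"
   and ts: "trans_seq ps as" and p0: "ps ! 0 = P" and bf: "bouts_fresh ps as"
    and h: "Suc i < length as \<and> l \<notin> fnP (ps ! i) \<and> as ! i = InA k l"
    and hj: "i < j \<and> j < length as" and out: "as ! j = OutA k' l"
  shows False
proof -
  obtain Q where Q: "cpi_proc Q" "P \<sim>\<^sub>\<pi> Q" using assms(1) by blast
  obtain Qi where Qi: "ps ! (0 + i) \<sim>\<^sub>\<pi> Qi" "cpi_proc Qi" "{} \<inter> ofn Qi = {}"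
    using seq_sim[OF ts bf finite.emptyI _ Q(1), of 0 i] p0 Q(2) h by auto
  have ti: "trans (ps ! i) (InA k l) (ps ! Suc i)"
    using ts h unfolding trans_seq_def by (metis Suc_lessD)
  obtain Q1 where Q1: "ps ! Suc i \<sim>\<^sub>\<pi> Q1" "cpi_proc Q1" "l \<notin> ofn Q1"
    using sim_in[OF _ Qi(2) ti] Qi(1) h by auto
  have bo: "\<forall>j k m. Suc i \<le> j \<and> j < length as \<and> as ! j = BOutA k m \<longrightarrow> m \<notin> {l}"
  proof (intro allI impI)
    fix j k m assume "Suc i \<le> j \<and> j < length as \<and> as ! j = BOutA k m"
    then have "m \<notin> nA (as ! i)" using bf unfolding bouts_fresh_def by auto
    then show "m \<notin> {l}" using h by (auto simp: nA_def)
  qed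
  obtain Qj where Qj: "ps ! (Suc i + (j - Suc i)) \<sim>\<^sub>\<pi> Qj" "cpi_proc Qj" "{l} \<inter> ofn Qj = {}"
    using seq_sim[OF ts bf _ Q1(1,2) _ bo, of "j - Suc i"] Q1(3) hj by auto
  have jj: "Suc i + (j - Suc i) = j" using hj by auto
  have tj: "trans (ps ! j) (OutA k' l) (ps ! Suc j)" using ts hj out by (auto simp: trans_seq_def)
  obtain Q' where "trans Qj (OutA k' l) Q'" using bisim_step[OF _ tj] Qj(1) jj by auto
  then have "l \<in> ofn Qj" using out_ofn by blast
  then show False using Qj(3) by auto
qed


theorem proposition2:
  assumes "pi_proc P"
    and "\<exists>Q. cpi_proc Q \<and> P \<sim>\<^sub>\<pi> Q"
  shows "non_forwarding P"
  unfolding non_forwarding_def using main_lemma[OF assms(2)] by blast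


end
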